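(* Let $G$ be a graph obtained as follows: start with a connected bipartite graph (the core) with bipartition $X\sqcup Y$, $X=\{x_1,\dots,x_n\}$, $Y=\{y_1,\dots,y_m\}$, $n,m\ge 1$; attach $f_i\ge 1$ leaves (new degree-one vertices adjacent only to $x_i$) to each $x_i$; and attach $t_j\ge 0$ pendant triangles to each $y_j$ (a pendant triangle at $y_j$ consists of two new vertices $u,v$ with edges $\{y_j,u\},\{y_j,v\},\{u,v\}$). Let $T=\sum_{j=1}^m t_j$. Then $P_G(-1)=(-1)^{n+T}\in\{\pm1\}$. In particular, $\mathfrak a(G)=0$.
   Context: The independence polynomial of a graph $G$ is $P_G(x)=\sum_i g_ix^i$, where $g_i$ is the number of independent sets of size $i$. For $G$ on vertex set $[N]$, let $S=K[x_1,\dots,x_N]$ ($K$ a field), $I(G)$ the edge ideal generated by $x_ix_j$ for edges $\{i,j\}$, and $\alpha(G)$ the independence number (equal to $\dim S/I(G)$). Writing the Hilbert series of $S/I(G)$ uniquely as $h_G(t)/(1-t)^{\alpha(G)}$ with $h_G(t)$ a polynomial with nonzero leading coefficient, the $\mathfrak a$-invariant is $\mathfrak a(G)=\deg h_G(t)-\alpha(G)$. *)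

theory Defs
  imports "HOL-Computational_Algebra.Computational_Algebra"
begin

definition simple_graph :: "'a set \<Rightarrow> 'a set set \<Rightarrow> bool" where
  "simple_graph V E \<longleftrightarrow> finite V \<and> (\<forall>e\<in>E. e \<subseteq> V \<and> card e = 2)"

definition indep_set :: "'a set \<Rightarrow> 'a set set \<Rightarrow> 'a set \<Rightarrow> bool" where
  "indep_set V E S \<longleftrightarrow> S \<subseteq> V \<and> (\<forall>e\<in>E. \<not> e \<subseteq> S)"

definition indep_poly :: "'a set \<Rightarrow> 'a set set \<Rightarrow> int poly" where
  "indep_poly V E = (\<Sum>S\<in>{S. indep_set V E S}. monom 1 (card S))"

definition indep_num :: "'a set \<Rightarrow> 'a set set \<Rightarrow> nat" where
  "indep_num V E = Max (card ` {S. indep_set V E S})"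

text \<open>The degree-d component of S/I(G), for the monomial ideal I(G), has as K-basis the
  standard monomials of degree d, i.e. the monomials x^a (a : V \<Rightarrow> nat, supported on V)
  of degree d not divisible by any x_i x_j with {i,j} an edge. Its dimension is thus
  the following count (independent of the field K).\<close>
definition hilb_fun :: "'a set \<Rightarrow> 'a set set \<Rightarrow> nat \<Rightarrow> nat" where
  "hilb_fun V E d = card {a :: 'a \<Rightarrow> nat. (\<forall>v. v \<notin> V \<longrightarrow> a v = 0) \<and> sum a V = d
                         \<and> (\<forall>e\<in>E. \<not> (\<forall>v\<in>e. 0 < a v))}"

definition hilb_series :: "'a set \<Rightarrow> 'a set set \<Rightarrow> rat fps" where
  "hilb_series V E = Abs_fps (\<lambda>d. of_nat (hilb_fun V E d))"

definition h_poly :: "'a set \<Rightarrow> 'a set set \<Rightarrow> rat poly" where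
  "h_poly V E = (THE h. fps_of_poly h = hilb_series V E * (1 - fps_X) ^ indep_num V E)"

definition a_invariant :: "'a set \<Rightarrow> 'a set set \<Rightarrow> int" where
  "a_invariant V E = int (degree (h_poly V E)) - int (indep_num V E)"

text \<open>Vertices: core vertices x_i (i<n), y_j (j<m); leaves Lf i k (k < f i) at x_i;
  pendant triangle k at y_j has new vertices TU j k, TW j k (k < t j).\<close>
datatype gv = Xv nat | Yv nat | Lf nat nat | TU nat nat | TW nat nat

text \<open>C \<subseteq> {..<n} \<times> {..<m} describes the core edges {x_i, y_j}.\<close>
definition core_verts :: "nat \<Rightarrow> nat \<Rightarrow> gv set" where
  "core_verts n m = Xv ` {..<n} \<union> Yv ` {..<m}"

definition core_adj :: "(nat \<times> nat) set \<Rightarrow> gv \<Rightarrow> gv \<Rightarrow> bool" where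
  "core_adj C u v \<longleftrightarrow> (\<exists>(i,j)\<in>C. (u = Xv i \<and> v = Yv j) \<or> (u = Yv j \<and> v = Xv i))"

definition core_connected :: "nat \<Rightarrow> nat \<Rightarrow> (nat \<times> nat) set \<Rightarrow> bool" where
  "core_connected n m C \<longleftrightarrow> (\<forall>u\<in>core_verts n m. \<forall>v\<in>core_verts n m. (core_adj C)\<^sup>*\<^sup>* u v)"

definition G_verts :: "nat \<Rightarrow> nat \<Rightarrow> (nat \<Rightarrow> nat) \<Rightarrow> (nat \<Rightarrow> nat) \<Rightarrow> gv set" where
  "G_verts n m f t = core_verts n m
     \<union> {Lf i k | i k. i < n \<and> k < f i}
     \<union> {TU j k | j k. j < m \<and> k < t j} \<union> {TW j k | j k. j < m \<and> k < t j}"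

definition G_edges :: "nat \<Rightarrow> nat \<Rightarrow> (nat \<times> nat) set \<Rightarrow> (nat \<Rightarrow> nat) \<Rightarrow> (nat \<Rightarrow> nat) \<Rightarrow> gv set set" where
  "G_edges n m C f t = {{Xv i, Yv j} | i j. (i, j) \<in> C}
     \<union> {{Xv i, Lf i k} | i k. i < n \<and> k < f i}
     \<union> {{Yv j, TU j k} | j k. j < m \<and> k < t j}
     \<union> {{Yv j, TW j k} | j k. j < m \<and> k < t j}
     \<union> {{TU j k, TW j k} | j k. j < m \<and> k < t j}"

end

theory Submission
  imports Defs
begin


definition wsum :: "'a set set \<Rightarrow> 'a set \<Rightarrow> int" where
  "wsum E V = (\<Sum>S\<in>{S. indep_set V E S}. (-1) ^ card S)"

definition nb :: "'a set set \<Rightarrow> 'a \<Rightarrow> 'a set" where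
  "nb E v = {u. \<exists>e\<in>E. v \<in> e \<and> u \<in> e \<and> u \<noteq> v}"

lemma finite_indep: "finite V \<Longrightarrow> finite {S. indep_set V E S}"
  by (rule finite_subset[of _ "Pow V"]) (auto simp: indep_set_def)

lemma wsum_del:
  assumes V: "finite V" and v: "v \<in> V" and E2: "\<forall>e\<in>E. card e = 2"
  shows "wsum E V = wsum E (V - {v}) - wsum E (V - {v} - nb E v)"
proof -
  let ?I = "{S. indep_set V E S}"
  have fin: "finite ?I" using finite_indep[OF V] .
  have split: "?I = {S\<in>?I. v \<notin> S} \<union> {S\<in>?I. v \<in> S}" by auto
  have s: "wsum E V = (\<Sum>S\<in>{S\<in>?I. v \<notin> S}. (-1) ^ card S) + (\<Sum>S\<in>{S\<in>?I. v \<in> S}. (-1) ^ card S)"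
    unfolding wsum_def by (subst split, rule sum.union_disjoint) (use fin in auto)
  have I0: "{S\<in>?I. v \<notin> S} = {S. indep_set (V - {v}) E S}"
    by (auto simp: indep_set_def)
  have I1: "{S\<in>?I. v \<in> S} = insert v ` {S. indep_set (V - {v} - nb E v) E S}"
  proof (rule set_eqI, rule iffI)
    fix T assume T: "T \<in> {S\<in>?I. v \<in> S}"
    have "T - {v} \<in> {S. indep_set (V - {v} - nb E v) E S}"
    proof -
      have "u \<notin> nb E v" if "u \<in> T" "u \<noteq> v" for u
      proof
        assume "u \<in> nb E v"
        then obtain e where e: "e \<in> E" "v \<in> e" "u \<in> e" by (auto simp: nb_def)
        have "card e = 2" using E2 e(1) by auto
        then obtain a b where ab: "e = {a,b}" "a \<noteq> b" by (auto simp: card_2_iff)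
        hence "e = {v,u}" using e that by auto
        hence "e \<subseteq> T" using T that by auto
        thus False using T e(1) by (auto simp: indep_set_def)
      qed
      thus ?thesis using T by (auto simp: indep_set_def)
    qed
    moreover have "T = insert v (T - {v})" using T by auto
    ultimately show "T \<in> insert v ` {S. indep_set (V - {v} - nb E v) E S}" by blast
  next
    fix T assume "T \<in> insert v ` {S. indep_set (V - {v} - nb E v) E S}"
    then obtain S where S: "indep_set (V - {v} - nb E v) E S" and T: "T = insert v S" by auto
    have "\<not> e \<subseteq> T" if e: "e \<in> E" for e
    proof
      assume sub: "e \<subseteq> T"
      show False
      proof (cases "v \<in> e")
        case False
        hence "e \<subseteq> S" using sub T by auto
        thus False using S e by (auto simp: indep_set_def)
      next
        case True
        have "card e = 2" using E2 e by auto
        then obtain a b where ab: "e = {a,b}" "a \<noteq> b" by (auto simp: card_2_iff)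
        then obtain u where u: "u \<in> e" "u \<noteq> v" using True by auto
        hence "u \<in> nb E v" using e True by (auto simp: nb_def)
        moreover have "u \<in> S" using u sub T by auto
        ultimately show False using S by (auto simp: indep_set_def)
      qed
    qed
    thus "T \<in> {S\<in>?I. v \<in> S}" using S T v by (auto simp: indep_set_def)
  qed
  have inj: "inj_on (insert v) {S. indep_set (V - {v} - nb E v) E S}"
    by (rule inj_onI) (auto simp: indep_set_def)
  have "(\<Sum>S\<in>{S\<in>?I. v \<in> S}. (-1::int) ^ card S) = (\<Sum>S\<in>{S. indep_set (V - {v} - nb E v) E S}. (-1) ^ card (insert v S))"
    unfolding I1 by (rule sum.reindex[OF inj, unfolded comp_def])
  also have "\<dots> = - wsum E (V - {v} - nb E v)"
    unfolding wsum_def sum_negf[symmetric]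
  proof (rule sum.cong[OF refl])
    fix S assume "S \<in> {S. indep_set (V - {v} - nb E v) E S}"
    hence "finite S" "v \<notin> S" using V by (auto simp: indep_set_def intro: finite_subset)
    thus "(-1::int) ^ card (insert v S) = - ((-1) ^ card S)" by simp
  qed
  finally show ?thesis using s I0 unfolding wsum_def by simp
qed

lemma wsum_iso:
  assumes V: "finite V" and v: "v \<in> V" and E2: "\<forall>e\<in>E. card e = 2" and "nb E v \<inter> V = {}"
  shows "wsum E V = 0"
proof -
  have "V - {v} - nb E v = V - {v}" using assms(4) by auto
  thus ?thesis using wsum_del[OF V v E2] by simp
qed

lemma wsum_leaf:
  assumes V: "finite V" and l: "l \<in> V" and x: "x \<in> V" "l \<noteq> x" and E2: "\<forall>e\<in>E. card e = 2"
    and nl: "nb E l \<inter> V \<subseteq> {x}"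
  shows "wsum E V = - wsum E (V - {x} - nb E x)"
proof -
  have "wsum E (V - {x}) = 0"
    by (rule wsum_iso) (use V l x E2 nl in auto)
  thus ?thesis using wsum_del[OF V x(1) E2] by simp
qed


lemma memE: "e \<in> G_edges n m C f t \<longleftrightarrow>
   (\<exists>i j. (i,j) \<in> C \<and> e = {Xv i, Yv j}) \<or> (\<exists>i k. i < n \<and> k < f i \<and> e = {Xv i, Lf i k})
 \<or> (\<exists>j k. j < m \<and> k < t j \<and> e = {Yv j, TU j k}) \<or> (\<exists>j k. j < m \<and> k < t j \<and> e = {Yv j, TW j k})
 \<or> (\<exists>j k. j < m \<and> k < t j \<and> e = {TU j k, TW j k})"
  unfolding G_edges_def by blast

lemma nb_TW: "nb (G_edges n m C f t) (TW j k) \<subseteq> {Yv j, TU j k}"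
  by (auto simp: nb_def memE)
lemma card2_eq: assumes "card e = 2" "v \<in> e" "u \<in> e" "u \<noteq> v" shows "e = {v,u}"
proof -
  obtain x y where "e = {x,y}" "x \<noteq> y" using assms(1) by (auto simp: card_2_iff)
  thus ?thesis using assms(2-4) by auto
qed

lemma E2: "\<forall>e\<in>G_edges n m C f t. card e = 2"
  by (auto simp: G_edges_def)

lemma nb_char: assumes "\<forall>e\<in>E. card e = 2" shows "u \<in> nb E v \<longleftrightarrow> {v,u} \<in> E \<and> u \<noteq> v"
proof
  assume "u \<in> nb E v"
  then obtain e where "e \<in> E" "v \<in> e" "u \<in> e" "u \<noteq> v" by (auto simp: nb_def)
  thus "{v,u} \<in> E \<and> u \<noteq> v" using card2_eq[of e v u] assms by auto
next
  assume "{v,u} \<in> E \<and> u \<noteq> v"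
  thus "u \<in> nb E v" unfolding nb_def by blast
qed

lemma nbG: "u \<in> nb (G_edges n m C f t) v \<longleftrightarrow> {v,u} \<in> G_edges n m C f t \<and> u \<noteq> v"
  using nb_char[OF E2] .

lemma memX: "{Xv i, u} \<in> G_edges n m C f t \<longleftrightarrow> (\<exists>j. (i,j) \<in> C \<and> u = Yv j) \<or> (i < n \<and> (\<exists>l < f i. u = Lf i l))"
  unfolding memE doubleton_eq_iff by auto
lemma memTU: "{TU j k, u} \<in> G_edges n m C f t \<longleftrightarrow> j < m \<and> k < t j \<and> (u = Yv j \<or> u = TW j k)"
  unfolding memE doubleton_eq_iff by auto
lemma memTW: "{TW j k, u} \<in> G_edges n m C f t \<longleftrightarrow> j < m \<and> k < t j \<and> (u = Yv j \<or> u = TU j k)"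
  unfolding memE doubleton_eq_iff by auto
lemma memLf: "{Lf i l, u} \<in> G_edges n m C f t \<longleftrightarrow> i < n \<and> l < f i \<and> u = Xv i"
  unfolding memE doubleton_eq_iff by auto
lemma nb_TU: "nb (G_edges n m C f t) (TU j k) \<subseteq> {Yv j, TW j k}"
  by (auto simp: nbG memTU)
lemma nb_TU2: "j < m \<Longrightarrow> k < t j \<Longrightarrow> TW j k \<in> nb (G_edges n m C f t) (TU j k)"
  by (auto simp: nbG memTU)
lemma nb_Lf: "nb (G_edges n m C f t) (Lf i l) \<subseteq> {Xv i}"
  by (auto simp: nbG memLf)
lemma nb_Xv: "i < n \<Longrightarrow> nb (G_edges n m C f t) (Xv i) = {Yv j | j. (i,j) \<in> C} \<union> {Lf i l | l. l < f i}"
  by (auto simp: nbG memX)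

definition Tri :: "(nat \<times> nat) set \<Rightarrow> gv set" where
  "Tri P = (\<lambda>(j,k). TU j k) ` P \<union> (\<lambda>(j,k). TW j k) ` P"

lemma wsum_Tri:
  assumes "finite P" "P \<subseteq> {(j,k). j < m \<and> k < t j}"
  shows "wsum (G_edges n m C f t) (Tri P) = (-1) ^ card P"
  using assms
proof (induction P rule: finite_induct)
  case empty
  have "{} \<notin> G_edges n m C f t" using E2[of n m C f t] by force
  hence "{S. indep_set {} (G_edges n m C f t) S} = {{}}" by (auto simp: indep_set_def)
  thus ?case using E2[of n m C f t] by (simp add: wsum_def Tri_def)
next
  case (insert p P)
  obtain j k where p: "p = (j,k)" by force
  have jk: "j < m" "k < t j" using insert p by auto
  let ?E = "G_edges n m C f t"
  have fin: "finite (Tri (insert p P))" using insert by (simp add: Tri_def)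
  have "wsum ?E (Tri (insert p P)) = - wsum ?E (Tri (insert p P) - {TU j k} - nb ?E (TU j k))"
    apply (rule wsum_leaf[OF fin _ _ _ E2, of "TW j k"])
    using nb_TW[of n m C f t j k] p by (auto simp: Tri_def)
  also have "Tri (insert p P) - {TU j k} - nb ?E (TU j k) = Tri P"
    using nb_TU[of n m C f t j k] nb_TU2[of j m k t n C f] jk p insert(2) by (auto simp: Tri_def)
  finally show ?case using insert by simp
qed

definition Vk :: "nat \<Rightarrow> nat \<Rightarrow> (nat \<times> nat) set \<Rightarrow> (nat \<Rightarrow> nat) \<Rightarrow> (nat \<Rightarrow> nat) \<Rightarrow> nat \<Rightarrow> gv set" where
  "Vk n m C f t k = {Xv i | i. k \<le> i \<and> i < n} \<union> {Lf i l | i l. k \<le> i \<and> i < n \<and> l < f i}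
     \<union> {Yv j | j. j < m \<and> (\<forall>i<k. (i,j) \<notin> C)} \<union> Tri {(j,k). j < m \<and> k < t j}"

lemma finite_Sig: "finite {(j,k). j < (m::nat) \<and> k < (t j::nat)}"
proof -
  have "{(j,k). j < m \<and> k < t j} = (SIGMA j:{..<m}. {..<t j})" by auto
  thus ?thesis by simp
qed

lemma finite_Vk: "finite (Vk n m C f t k)"
proof -
  have "{Lf i l | i l. k \<le> i \<and> i < n \<and> l < f i} \<subseteq> (\<lambda>(i,l). Lf i l) ` (SIGMA i:{..<n}. {..<f i})" by auto
  hence "finite {Lf i l | i l. k \<le> i \<and> i < n \<and> l < f i}" by (rule finite_subset) auto
  moreover have "{Xv i | i. k \<le> i \<and> i < n} \<subseteq> Xv ` {..<n}" by auto
  moreover have "{Yv j | j. j < m \<and> (\<forall>i<k. (i,j) \<notin> C)} \<subseteq> Yv ` {..<m}" by auto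
  ultimately show ?thesis unfolding Vk_def Tri_def using finite_Sig[of m t]
    by (auto intro: finite_subset)
qed

lemma wsum_step:
  assumes "k < n" "f k \<ge> 1"
  shows "wsum (G_edges n m C f t) (Vk n m C f t k) = - wsum (G_edges n m C f t) (Vk n m C f t (Suc k))"
proof -
  let ?E = "G_edges n m C f t"
  have "wsum ?E (Vk n m C f t k) = - wsum ?E (Vk n m C f t k - {Xv k} - nb ?E (Xv k))"
    apply (rule wsum_leaf[OF finite_Vk _ _ _ E2, of "Lf k 0"])
    using nb_Lf[of n m C f t k 0] assms by (auto simp: Vk_def)
  also have "Vk n m C f t k - {Xv k} - nb ?E (Xv k) = Vk n m C f t (Suc k)"
    unfolding nb_Xv[OF assms(1)] by (auto simp: Vk_def Tri_def less_Suc_eq le_less)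
  finally show ?thesis .
qed

lemma wsum_iter:
  assumes "k \<le> n" "\<forall>i<n. f i \<ge> 1"
  shows "wsum (G_edges n m C f t) (Vk n m C f t 0) = (-1)^k * wsum (G_edges n m C f t) (Vk n m C f t k)"
  using assms
proof (induction k)
  case 0 thus ?case by simp
next
  case (Suc k)
  thus ?case using wsum_step[of k n f m C t] by simp
qed

lemma conn:
  assumes "n \<ge> 1" "C \<subseteq> {..<n} \<times> {..<m}" "core_connected n m C" "j < m"
  shows "\<exists>i<n. (i,j) \<in> C"
proof -
  have "(core_adj C)\<^sup>*\<^sup>* (Yv j) (Xv 0)"
    using assms unfolding core_connected_def core_verts_def by auto
  then show ?thesis
  proof (cases rule: converse_rtranclpE)
    case base thus ?thesis by simp
  next
    case (step y)
    then obtain i where "(i,j) \<in> C" unfolding core_adj_def by auto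
    thus ?thesis using assms(2) by auto
  qed
qed

lemma wsum_G:
  assumes "n \<ge> 1" and "m \<ge> 1"
    and "C \<subseteq> {..<n} \<times> {..<m}"
    and "core_connected n m C"
    and "\<forall>i<n. f i \<ge> 1"
  shows "wsum (G_edges n m C f t) (G_verts n m f t) = (-1) ^ (n + (\<Sum>j<m. t j))"
proof -
  have V0: "Vk n m C f t 0 = G_verts n m f t"
    unfolding Vk_def G_verts_def Tri_def core_verts_def by auto
  have Vn: "Vk n m C f t n = Tri {(j,k). j < m \<and> k < t j}"
    using conn[OF assms(1,3,4)] unfolding Vk_def by auto
  have c: "card {(j,k). j < m \<and> k < t j} = (\<Sum>j<m. t j)"
  proof -
    have "{(j,k). j < m \<and> k < t j} = (SIGMA j:{..<m}. {..<t j})" by auto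
    thus ?thesis by (simp add: card_SigmaI)
  qed
  have T: "wsum (G_edges n m C f t) (Tri {(j,k). j < m \<and> k < t j}) = (-1) ^ card {(j,k). j < m \<and> k < t j}"
    by (rule wsum_Tri[OF finite_Sig]) auto
  show ?thesis
    using wsum_iter[of n n f m C t] assms(5) V0 Vn T c
    by (simp add: power_add)
qed



definition Aset :: "'a set \<Rightarrow> nat \<Rightarrow> ('a \<Rightarrow> nat) set" where
  "Aset S d = {a. (\<forall>x. x \<notin> S \<longrightarrow> a x = 0) \<and> (\<forall>x\<in>S. 0 < a x) \<and> sum a S = d}"

lemma finite_Aset: assumes "finite S" shows "finite (Aset S d)"
proof -
  have "Aset S d \<subseteq> {a. \<forall>x. (x \<in> S \<longrightarrow> a x \<in> {..d}) \<and> (x \<notin> S \<longrightarrow> a x = 0)}"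
    unfolding Aset_def using member_le_sum[OF _ _ assms] by fastforce
  thus ?thesis by (rule finite_subset) (rule finite_set_of_finite_funs; use assms in simp)
qed

definition Fs :: "'a set \<Rightarrow> rat fps" where
  "Fs S = Abs_fps (\<lambda>d. of_nat (card (Aset S d)))"

definition F1 :: "rat fps" where "F1 = Abs_fps (\<lambda>i. if i = 0 then 0 else 1)"

lemma F1_mult: "F1 * (1 - fps_X) = fps_X"
proof (rule fps_ext)
  fix n
  have "(F1 * (1 - fps_X)) $ n = F1 $ n - (fps_X * F1) $ n"
    by (simp add: algebra_simps)
  thus "(F1 * (1 - fps_X)) $ n = fps_X $ n"
    by (cases n) (auto simp: F1_def)
qed

lemma Fs_empty: "Fs ({}::'a set) = 1"
proof (rule fps_ext)
  fix d
  have "Aset ({}::'a set) d = (if d = 0 then {\<lambda>_. 0} else {})" by (auto simp: Aset_def)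
  hence "card (Aset ({}::'a set) d) = (if d = 0 then 1 else 0)" by (cases "d = 0") auto
  thus "Fs ({}::'a set) $ d = 1 $ d" by (simp add: Fs_def)
qed

lemma Aset_insert:
  assumes S: "finite S" and v: "v \<notin> S"
  shows "Aset (insert v S) d = (\<Union>i\<in>{1..d}. (\<lambda>b. b(v := i)) ` Aset S (d - i))"
proof (rule set_eqI, rule iffI)
  fix a assume a: "a \<in> Aset (insert v S) d"
  let ?b = "a(v := 0)"
  have s: "sum a (insert v S) = a v + sum a S" using S v by simp
  have sb: "sum ?b S = sum a S" using v by (intro sum.cong) auto
  have "?b \<in> Aset S (d - a v)" using a s sb v by (auto simp: Aset_def)
  moreover have "a v \<in> {1..d}" using a s by (auto simp: Aset_def Suc_le_eq)
  moreover have "a = ?b(v := a v)" by simp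
  ultimately show "a \<in> (\<Union>i\<in>{1..d}. (\<lambda>b. b(v := i)) ` Aset S (d - i))" by blast
next
  fix a assume "a \<in> (\<Union>i\<in>{1..d}. (\<lambda>b. b(v := i)) ` Aset S (d - i))"
  then obtain i b where i: "i \<in> {1..d}" and b: "b \<in> Aset S (d - i)" and ab: "a = b(v := i)" by auto
  have sb: "sum a S = sum b S" using v ab by (intro sum.cong) auto
  have "sum a (insert v S) = i + sum a S" using S v ab by simp
  thus "a \<in> Aset (insert v S) d" using i b sb ab v by (auto simp: Aset_def)
qed

lemma card_Aset_insert:
  assumes S: "finite S" and v: "v \<notin> S"
  shows "card (Aset (insert v S) d) = (\<Sum>i\<in>{1..d}. card (Aset S (d - i)))"
proof -
  have "card (Aset (insert v S) d) = (\<Sum>i\<in>{1..d}. card ((\<lambda>b. b(v := i)) ` Aset S (d - i)))"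
    unfolding Aset_insert[OF assms]
  proof (rule card_UN_disjoint)
    show "finite {1..d}" by simp
    show "\<forall>i\<in>{1..d}. finite ((\<lambda>b. b(v := i)) ` Aset S (d - i))" using finite_Aset[OF S] by simp
    show "\<forall>i\<in>{1..d}. \<forall>j\<in>{1..d}. i \<noteq> j \<longrightarrow> (\<lambda>b. b(v := i)) ` Aset S (d - i) \<inter> (\<lambda>b. b(v := j)) ` Aset S (d - j) = {}"
    proof (intro ballI impI)
      fix i j :: nat assume "i \<noteq> j"
      show "(\<lambda>b. b(v := i)) ` Aset S (d - i) \<inter> (\<lambda>b. b(v := j)) ` Aset S (d - j) = {}"
      proof (rule equals0I)
        fix a assume "a \<in> (\<lambda>b. b(v := i)) ` Aset S (d - i) \<inter> (\<lambda>b. b(v := j)) ` Aset S (d - j)"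
        then obtain b b' where "a = b(v := i)" "a = b'(v := j)" by blast
        hence "a v = i" "a v = j" by (metis fun_upd_same)+
        thus False using \<open>i \<noteq> j\<close> by simp
      qed
    qed
  qed
  also have "\<dots> = (\<Sum>i\<in>{1..d}. card (Aset S (d - i)))"
  proof (rule sum.cong[OF refl], rule card_image, rule inj_onI)
    fix i b b' assume "b \<in> Aset S (d - i)" "b' \<in> Aset S (d - i)" "b(v := i) = b'(v := i)"
    hence h: "b v = 0" "b' v = 0" "b(v := i) = b'(v := i)" using v unfolding Aset_def by auto
    show "b = b'"
    proof
      fix x show "b x = b' x"
      proof (cases "x = v")
        case True thus ?thesis using h by simp
      next
        case False thus ?thesis using fun_cong[OF h(3), of x] by simp
      qed
    qed
  qed
  finally show ?thesis .
qed

lemma Fs_insert: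
  assumes S: "finite S" and v: "v \<notin> S"
  shows "Fs (insert v S) = F1 * Fs S"
proof (rule fps_ext)
  fix d
  have "(F1 * Fs S) $ d = (\<Sum>i=0..d. F1 $ i * Fs S $ (d - i))" by (rule fps_mult_nth)
  also have "\<dots> = (\<Sum>i\<in>{1..d}. of_nat (card (Aset S (d - i))))"
  proof -
    have "(\<Sum>i=0..d. F1 $ i * Fs S $ (d - i)) = (\<Sum>i\<in>{1..d}. F1 $ i * Fs S $ (d - i))"
      by (rule sum.mono_neutral_right) (auto simp: F1_def)
    thus ?thesis by (simp add: F1_def Fs_def)
  qed
  also have "\<dots> = Fs (insert v S) $ d"
    by (simp add: Fs_def card_Aset_insert[OF assms])
  finally show "Fs (insert v S) $ d = (F1 * Fs S) $ d" ..
qed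

lemma Fs_closed: "finite S \<Longrightarrow> Fs S * (1 - fps_X) ^ card S = fps_X ^ card S"
proof (induction S rule: finite_induct)
  case empty thus ?case by (simp add: Fs_empty)
next
  case (insert v S)
  have "Fs (insert v S) * (1 - fps_X) ^ card (insert v S) = (F1 * (1 - fps_X)) * (Fs S * (1 - fps_X) ^ card S)"
    using insert by (simp add: Fs_insert algebra_simps)
  also have "\<dots> = fps_X ^ card (insert v S)" using insert by (simp add: F1_mult)
  finally show ?case .
qed

lemma hilb_Aset:
  fixes V :: "'a set"
  assumes V: "finite V"
  shows "hilb_fun V E d = (\<Sum>S\<in>{S. indep_set V E S}. card (Aset S d))"
proof -
  let ?I = "{S. indep_set V E S}"
  have eq: "{a :: 'a \<Rightarrow> nat. (\<forall>v. v \<notin> V \<longrightarrow> a v = 0) \<and> sum a V = d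
                         \<and> (\<forall>e\<in>E. \<not> (\<forall>v\<in>e. 0 < a v))} = (\<Union>S\<in>(?I). Aset S d)"
  proof (rule set_eqI, rule iffI)
    fix a assume a: "a \<in> {a :: 'a \<Rightarrow> nat. (\<forall>v. v \<notin> V \<longrightarrow> a v = 0) \<and> sum a V = d
                         \<and> (\<forall>e\<in>E. \<not> (\<forall>v\<in>e. 0 < a v))}"
    let ?S = "{x\<in>V. 0 < a x}"
    have "indep_set V E ?S" using a unfolding indep_set_def by blast
    moreover have "sum a ?S = sum a V"
      by (rule sum.mono_neutral_left) (use V in auto)
    hence "a \<in> Aset ?S d" using a unfolding Aset_def by auto
    ultimately show "a \<in> (\<Union>S\<in>(?I). Aset S d)" by blast
  next
    fix a assume "a \<in> (\<Union>S\<in>(?I). Aset S d)"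
    then obtain S where S: "indep_set V E S" and a: "a \<in> Aset S d" by blast
    have SV: "S \<subseteq> V" using S by (simp add: indep_set_def)
    have "sum a S = sum a V"
      by (rule sum.mono_neutral_left) (use V SV a in \<open>auto simp: Aset_def\<close>)
    moreover have "\<not> (\<forall>v\<in>e. 0 < a v)" if "e \<in> E" for e
    proof
      assume "\<forall>v\<in>e. 0 < a v"
      hence "e \<subseteq> S" using a unfolding Aset_def by (metis (mono_tags, lifting) less_irrefl mem_Collect_eq subsetI)
      thus False using S that by (auto simp: indep_set_def)
    qed
    ultimately show "a \<in> {a :: 'a \<Rightarrow> nat. (\<forall>v. v \<notin> V \<longrightarrow> a v = 0) \<and> sum a V = d
                         \<and> (\<forall>e\<in>E. \<not> (\<forall>v\<in>e. 0 < a v))}" using a SV by (auto simp: Aset_def)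
  qed
  have "card (\<Union>S\<in>(?I). Aset S d) = (\<Sum>S\<in>(?I). card (Aset S d))"
  proof (rule card_UN_disjoint)
    show "finite ?I" by (rule finite_indep[OF V])
    show "\<forall>S\<in>(?I). finite (Aset S d)" using V by (auto simp: indep_set_def intro: finite_Aset finite_subset)
    show "\<forall>S\<in>(?I). \<forall>T\<in>(?I). S \<noteq> T \<longrightarrow> Aset S d \<inter> Aset T d = {}"
    proof (intro ballI impI)
      fix S T :: "'a set" assume "S \<noteq> T"
      show "Aset S d \<inter> Aset T d = {}"
      proof (rule equals0I)
        fix a assume "a \<in> Aset S d \<inter> Aset T d"
        hence "S = {x. 0 < a x}" "T = {x. 0 < a x}" unfolding Aset_def by auto
        thus False using \<open>S \<noteq> T\<close> by simp
      qed
    qed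
  qed
  thus ?thesis unfolding hilb_fun_def eq .
qed

lemma hilb_series_eq:
  assumes V: "finite V"
  shows "hilb_series V E = (\<Sum>S\<in>{S. indep_set V E S}. Fs S)"
  by (rule fps_ext) (simp add: hilb_series_def fps_sum_nth Fs_def hilb_Aset[OF V])

lemma main_a:
  assumes V: "finite V" and nz: "(\<Sum>S\<in>{S. indep_set V E S}. (-1::int) ^ card S) \<noteq> 0"
  shows "a_invariant V E = 0"
proof -
  let ?I = "{S. indep_set V E S}"
  let ?al = "indep_num V E"
  have finI: "finite ?I" by (rule finite_indep[OF V])
  have finS: "finite S" if "S \<in> ?I" for S using that V by (auto simp: indep_set_def intro: finite_subset)
  have le: "card S \<le> ?al" if "S \<in> ?I" for S
    unfolding indep_num_def using finI that by (auto intro: Max_ge)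
  define q :: "rat poly" where "q = [:1, -1:]"
  define h where "h = (\<Sum>S\<in>(?I). monom 1 (card S) * q ^ (?al - card S))"
  have fq: "fps_of_poly q = 1 - fps_X"
    by (simp add: q_def fps_of_poly_pCons fps_const_neg[symmetric])
  have key: "fps_of_poly h = hilb_series V E * (1 - fps_X) ^ ?al"
  proof -
    have "hilb_series V E * (1 - fps_X) ^ ?al = (\<Sum>S\<in>(?I). Fs S * (1 - fps_X) ^ ?al)"
      by (simp add: hilb_series_eq[OF V] sum_distrib_right)
    also have "\<dots> = (\<Sum>S\<in>(?I). fps_X ^ card S * (1 - fps_X) ^ (?al - card S))"
    proof (rule sum.cong[OF refl])
      fix S assume S: "S \<in> ?I"
      have "Fs S * (1 - fps_X) ^ ?al = (Fs S * (1 - fps_X) ^ card S) * (1 - fps_X) ^ (?al - card S)"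
        using le[OF S] by (simp add: mult.assoc power_add[symmetric])
      thus "Fs S * (1 - fps_X) ^ ?al = fps_X ^ card S * (1 - fps_X) ^ (?al - card S)"
        using Fs_closed[OF finS[OF S]] by simp
    qed
    also have "\<dots> = fps_of_poly h"
      by (simp add: h_def fps_of_poly_sum fps_of_poly_mult fps_of_poly_monom' fps_of_poly_power fq)
    finally show ?thesis by simp
  qed
  have hp: "h_poly V E = h"
    unfolding h_poly_def
  proof (rule the_equality)
    show "fps_of_poly h = hilb_series V E * (1 - fps_X) ^ ?al" by (rule key)
    fix h' assume "fps_of_poly h' = hilb_series V E * (1 - fps_X) ^ ?al"
    thus "h' = h" using key by (metis fps_of_poly_eq_iff)
  qed
  have dq: "degree q = 1" and q0: "q \<noteq> 0" and lq: "lead_coeff q = -1" by (simp_all add: q_def)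
  have "degree h \<le> ?al"
    unfolding h_def
  proof (rule degree_sum_le[OF finI])
    fix S assume S: "S \<in> ?I"
    have "degree (monom (1::rat) (card S) * q ^ (?al - card S)) \<le> card S + (?al - card S)"
      using degree_mult_le[of "monom (1::rat) (card S)" "q ^ (?al - card S)"]
        degree_monom_le[of "1::rat" "card S"] degree_power_le[of q "?al - card S"] dq
      by simp
    thus "degree (monom 1 (card S) * q ^ (?al - card S)) \<le> ?al" using le[OF S] by simp
  qed
  moreover have "coeff h ?al \<noteq> 0"
  proof -
    have "coeff h ?al = (\<Sum>S\<in>(?I). (-1) ^ (?al - card S))"
      unfolding h_def coeff_sum
    proof (rule sum.cong[OF refl])
      fix S assume S: "S \<in> ?I"
      have "coeff (monom (1::rat) (card S) * q ^ (?al - card S)) ?al = coeff (q ^ (?al - card S)) (?al - card S)"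
        using le[OF S] by (simp add: coeff_monom_mult)
      also have "\<dots> = (-1) ^ (?al - card S)"
        using lead_coeff_power[of q "?al - card S"] degree_power_eq[OF q0, of "?al - card S"] dq lq by simp
      finally show "coeff (monom 1 (card S) * q ^ (?al - card S)) ?al = (-1) ^ (?al - card S)" .
    qed
    also have "\<dots> = (\<Sum>S\<in>(?I). (-1) ^ ?al * (-1) ^ card S)"
    proof (rule sum.cong[OF refl])
      fix S assume S: "S \<in> ?I"
      have "(-1::rat) ^ ?al = (-1) ^ (?al - card S) * (-1) ^ card S"
        using le[OF S] by (simp add: power_add[symmetric])
      hence "(-1::rat) ^ ?al * (-1) ^ card S = (-1) ^ (?al - card S) * ((-1) ^ card S * (-1) ^ card S)"
        by simp
      also have "(-1::rat) ^ card S * (-1) ^ card S = 1" by (simp add: power_add[symmetric])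
      finally show "(-1::rat) ^ (?al - card S) = (-1) ^ ?al * (-1) ^ card S" by simp
    qed
    also have "\<dots> = (-1) ^ ?al * of_int (\<Sum>S\<in>(?I). (-1::int) ^ card S)"
      by (simp add: sum_distrib_left)
    finally have c: "coeff h ?al = (-1) ^ ?al * of_int (\<Sum>S\<in>(?I). (-1::int) ^ card S)" .
    have "(of_int (\<Sum>S\<in>(?I). (-1::int) ^ card S) :: rat) \<noteq> 0" using nz by (simp only: of_int_eq_0_iff not_False_eq_True)
    thus ?thesis unfolding c by (simp only: mult_eq_0_iff power_eq_0_iff) simp
  qed
  hence "?al \<le> degree h" by (rule le_degree)
  ultimately show ?thesis unfolding a_invariant_def hp by simp
qed


lemma finite_G: "finite (G_verts n m f t)"
proof -
  have "Vk n m C f t 0 = G_verts n m f t"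
    unfolding Vk_def G_verts_def Tri_def core_verts_def by auto
  thus ?thesis using finite_Vk[of n m C f t 0] by simp
qed

theorem theorem4p3:
  fixes n m :: nat and C :: "(nat \<times> nat) set" and f t :: "nat \<Rightarrow> nat"
  assumes "n \<ge> 1" and "m \<ge> 1"
    and "C \<subseteq> {..<n} \<times> {..<m}"
    and "core_connected n m C"
    and "\<forall>i<n. f i \<ge> 1"
  shows "poly (indep_poly (G_verts n m f t) (G_edges n m C f t)) (-1)
           = (-1) ^ (n + (\<Sum>j<m. t j))
         \<and> a_invariant (G_verts n m f t) (G_edges n m C f t) = 0"
proof
  have P: "poly (indep_poly (G_verts n m f t) (G_edges n m C f t)) (-1) = wsum (G_edges n m C f t) (G_verts n m f t)"
    unfolding indep_poly_def wsum_def poly_sum poly_monom by simp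
  have W: "wsum (G_edges n m C f t) (G_verts n m f t) = (-1) ^ (n + (\<Sum>j<m. t j))"
    by (rule wsum_G[OF assms])
  show "poly (indep_poly (G_verts n m f t) (G_edges n m C f t)) (-1) = (-1) ^ (n + (\<Sum>j<m. t j))"
    using P W by simp
  show "a_invariant (G_verts n m f t) (G_edges n m C f t) = 0"
  proof (rule main_a[OF finite_G])
    show "(\<Sum>S\<in>{S. indep_set (G_verts n m f t) (G_edges n m C f t) S}. (-1::int) ^ card S) \<noteq> 0"
      using W unfolding wsum_def by simp
  qed
qed

end
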